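(* Let $m,p\ge1$, let $\mathbf{X}=(X_1,\dots,X_p)$ take values in $\mathbb{X}^p$ with $|\mathbb{X}|=m$, and $Y$ in $\{0,1\}$, so that joint distributions of $(\mathbf{X},Y)$ are identified with probability vectors $\mathbf{p}\in\mathbb{R}_+^{2m^p}$, $\mathbf{1}^T\mathbf{p}=1$. Let $\tilde{\mathbf{p}}$ be the uniform probability vector. Then there exists $\epsilon>0$ such that for every probability vector $\mathbf{p}$ with $\|\mathbf{p}-\tilde{\mathbf{p}}\|_1<\epsilon$, the class $\mathcal{C}(\mathbf{p})$ contains a distribution $\hat{\mathbb{P}}$ for which there exist functions $f_i:\mathbb{X}\to\mathbb{R}$, $i=1,\dots,p$, with $\mathbb{E}_{\hat{\mathbb{P}}}[Y\mid\mathbf{X}]=\sum_{i=1}^p f_i(X_i)$.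
   Context: For a probability vector $\mathbf{p}$, $\mathcal{C}(\mathbf{p})$ denotes the class of all joint distributions of $(\mathbf{X},Y)$ having the same pairwise marginals as $\mathbf{p}$, i.e. the same values of $\mathbb{P}(X_i=x_i,X_j=x_j)$ and $\mathbb{P}(X_i=x_i,Y=y)$ for all $i,j\in\{1,\dots,p\}$, $x_i,x_j\in\mathbb{X}$, $y\in\{0,1\}$. *)

theory Defs
  imports Complex_Main "HOL-Library.FuncSet"
begin

text \<open>Feature values range over a finite type 'x with m = CARD('x) \<ge> 1 elements.
  A feature vector X = (X_0,...,X_{p-1}) is a function nat \<Rightarrow> 'x restricted to {..<p}
  (extensional, i.e. an element of PiE {..<p} (\<lambda>_. UNIV)); the label Y \<in> {0,1}
  is encoded as bool (True = 1).\<close>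

definition Xspace :: "nat \<Rightarrow> (nat \<Rightarrow> 'x) set" where
  "Xspace p = PiE {..<p} (\<lambda>_. UNIV)"

definition Omega :: "nat \<Rightarrow> ((nat \<Rightarrow> 'x) \<times> bool) set" where
  "Omega p = Xspace p \<times> UNIV"

definition is_prob_vec :: "nat \<Rightarrow> ((nat \<Rightarrow> 'x) \<times> bool \<Rightarrow> real) \<Rightarrow> bool" where
  "is_prob_vec p P \<longleftrightarrow> (\<forall>\<omega>\<in>Omega p. P \<omega> \<ge> 0) \<and> (\<Sum>\<omega>\<in>Omega p. P \<omega>) = 1"

definition uniform_vec :: "nat \<Rightarrow> (nat \<Rightarrow> 'x::finite) \<times> bool \<Rightarrow> real" where
  "uniform_vec p \<omega> = 1 / (2 * real (card (UNIV :: 'x set)) ^ p)"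

definition l1_dist :: "nat \<Rightarrow> ((nat \<Rightarrow> 'x) \<times> bool \<Rightarrow> real) \<Rightarrow> ((nat \<Rightarrow> 'x) \<times> bool \<Rightarrow> real) \<Rightarrow> real" where
  "l1_dist p P Q = (\<Sum>\<omega>\<in>Omega p. \<bar>P \<omega> - Q \<omega>\<bar>)"

definition margXX :: "nat \<Rightarrow> ((nat \<Rightarrow> 'x) \<times> bool \<Rightarrow> real) \<Rightarrow> nat \<Rightarrow> nat \<Rightarrow> 'x \<Rightarrow> 'x \<Rightarrow> real" where
  "margXX p P i j a b = (\<Sum>\<omega>\<in>{\<omega>\<in>Omega p. fst \<omega> i = a \<and> fst \<omega> j = b}. P \<omega>)"

definition margXY :: "nat \<Rightarrow> ((nat \<Rightarrow> 'x) \<times> bool \<Rightarrow> real) \<Rightarrow> nat \<Rightarrow> 'x \<Rightarrow> bool \<Rightarrow> real" where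
  "margXY p P i a y = (\<Sum>\<omega>\<in>{\<omega>\<in>Omega p. fst \<omega> i = a \<and> snd \<omega> = y}. P \<omega>)"

definition same_pairwise :: "nat \<Rightarrow> ((nat \<Rightarrow> 'x) \<times> bool \<Rightarrow> real) \<Rightarrow> ((nat \<Rightarrow> 'x) \<times> bool \<Rightarrow> real) set" where
  "same_pairwise p P = {Q. is_prob_vec p Q \<and>
     (\<forall>i<p. \<forall>j<p. \<forall>a b. margXX p Q i j a b = margXX p P i j a b) \<and>
     (\<forall>i<p. \<forall>a y. margXY p Q i a y = margXY p P i a y)}"

text \<open>E_Q[Y | X = x] = Q(x,1) / Q(X = x), defined where Q(X = x) > 0
  (conditional expectation is determined only almost surely).\<close>
definition cond_exp_Y :: "((nat \<Rightarrow> 'x) \<times> bool \<Rightarrow> real) \<Rightarrow> (nat \<Rightarrow> 'x) \<Rightarrow> real" where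
  "cond_exp_Y Q x = Q (x, True) / (Q (x, True) + Q (x, False))"

definition additive_regression :: "nat \<Rightarrow> ((nat \<Rightarrow> 'x) \<times> bool \<Rightarrow> real) \<Rightarrow> bool" where
  "additive_regression p Q \<longleftrightarrow> (\<exists>f :: nat \<Rightarrow> 'x \<Rightarrow> real.
     \<forall>x\<in>Xspace p. Q (x, True) + Q (x, False) > 0 \<longrightarrow> cond_exp_Y Q x = (\<Sum>i<p. f i (x i)))"

end

theory Submission imports Defs begin

lemma proj_exists:
  fixes \<phi> :: "'k \<Rightarrow> 'a \<Rightarrow> real"
  assumes "finite K" "finite A" "\<forall>x\<in>A. r x > 0"
  shows "\<exists>a. \<forall>k\<in>K. (\<Sum>x\<in>A. r x * (h x - (\<Sum>j\<in>K. a j * \<phi> j x)) * \<phi> k x) = 0"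
  using assms(1)
proof (induction K arbitrary: h rule: finite_induct)
  case empty then show ?case by simp
next
  case (insert t K)
  from insert.IH[of h] obtain a where a: "\<forall>k\<in>K. (\<Sum>x\<in>A. r x * (h x - (\<Sum>j\<in>K. a j * \<phi> j x)) * \<phi> k x) = 0" by blast
  from insert.IH[of "\<phi> t"] obtain b where b: "\<forall>k\<in>K. (\<Sum>x\<in>A. r x * (\<phi> t x - (\<Sum>j\<in>K. b j * \<phi> j x)) * \<phi> k x) = 0" by blast
  define e where "e x = h x - (\<Sum>j\<in>K. a j * \<phi> j x)" for x
  define t' where "t' x = \<phi> t x - (\<Sum>j\<in>K. b j * \<phi> j x)" for x
  define S where "S = (\<Sum>x\<in>A. r x * t' x * t' x)"
  define c where "c = (if S = 0 then 0 else (\<Sum>x\<in>A. r x * e x * t' x) / S)"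
  define a' where "a' j = (if j = t then c else a j - c * b j)" for j
  have sumeq: "h x - (\<Sum>j\<in>insert t K. a' j * \<phi> j x) = e x - c * t' x" for x
  proof -
    have "(\<Sum>j\<in>insert t K. a' j * \<phi> j x) = c * \<phi> t x + (\<Sum>j\<in>K. (a j - c * b j) * \<phi> j x)"
    proof -
      have "(\<Sum>j\<in>insert t K. a' j * \<phi> j x) = a' t * \<phi> t x + (\<Sum>j\<in>K. a' j * \<phi> j x)"
        using insert.hyps by (rule sum.insert)
      moreover have "(\<Sum>j\<in>K. a' j * \<phi> j x) = (\<Sum>j\<in>K. (a j - c * b j) * \<phi> j x)"
        using insert.hyps(2) by (intro sum.cong) (auto simp: a'_def)
      ultimately show ?thesis by (simp add: a'_def)
    qed
    also have "(\<Sum>j\<in>K. (a j - c * b j) * \<phi> j x) = (\<Sum>j\<in>K. a j * \<phi> j x) - c * (\<Sum>j\<in>K. b j * \<phi> j x)"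
      by (simp add: algebra_simps sum_subtractf sum_distrib_left)
    finally show ?thesis unfolding e_def t'_def by (simp add: right_diff_distrib)
  qed
  have oK: "(\<Sum>x\<in>A. r x * (e x - c * t' x) * \<phi> k x) = 0" if "k \<in> K" for k
  proof -
    have "(\<Sum>x\<in>A. r x * (e x - c * t' x) * \<phi> k x) = (\<Sum>x\<in>A. r x * e x * \<phi> k x) - c * (\<Sum>x\<in>A. r x * t' x * \<phi> k x)"
      by (simp add: algebra_simps sum_subtractf sum_distrib_left)
    then show ?thesis using a b that unfolding e_def t'_def by simp
  qed
  have ot: "(\<Sum>x\<in>A. r x * (e x - c * t' x) * t' x) = 0"
  proof (cases "S = 0")
    case True
    have nn: "\<forall>x\<in>A. 0 \<le> r x * t' x * t' x"
    proof
      fix x assume "x \<in> A"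
      then have "0 \<le> r x" using assms(3) by (simp add: less_imp_le)
      then have "0 \<le> r x * (t' x * t' x)" by simp
      then show "0 \<le> r x * t' x * t' x" by (simp add: mult.assoc)
    qed
    have S0: "(\<Sum>x\<in>A. r x * t' x * t' x) = 0" using True unfolding S_def .
    have "\<forall>x\<in>A. r x * t' x * t' x = 0" using S0 sum_nonneg_eq_0_iff[OF assms(2), of "\<lambda>x. r x * t' x * t' x"] nn by blast
    then have "\<forall>x\<in>A. t' x = 0"
    proof (intro ballI)
      fix x assume "\<forall>x\<in>A. r x * t' x * t' x = 0" "x \<in> A"
      then have "r x * t' x * t' x = 0" "r x \<noteq> 0" using assms(3) by auto
      then show "t' x = 0" by simp
    qed
    then show ?thesis by simp
  next
    case False
    have "(\<Sum>x\<in>A. r x * (e x - c * t' x) * t' x) = (\<Sum>x\<in>A. r x * e x * t' x) - c * S"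
      unfolding S_def by (simp add: algebra_simps sum_subtractf sum_distrib_left)
    then show ?thesis using False c_def by simp
  qed
  have ott: "(\<Sum>x\<in>A. r x * (e x - c * t' x) * \<phi> t x) = 0"
  proof -
    have "(\<Sum>x\<in>A. r x * (e x - c * t' x) * \<phi> t x) = (\<Sum>x\<in>A. r x * (e x - c * t' x) * t' x)
       + (\<Sum>j\<in>K. b j * (\<Sum>x\<in>A. r x * (e x - c * t' x) * \<phi> j x))"
proof -
        have "\<phi> t x = t' x + (\<Sum>j\<in>K. b j * \<phi> j x)" for x unfolding t'_def by simp
        then have "(\<Sum>x\<in>A. r x * (e x - c * t' x) * \<phi> t x) = (\<Sum>x\<in>A. r x * (e x - c * t' x) * t' x + (\<Sum>j\<in>K. r x * (e x - c * t' x) * (b j * \<phi> j x)))"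
          by (simp add: distrib_left sum_distrib_left)
        also have "\<dots> = (\<Sum>x\<in>A. r x * (e x - c * t' x) * t' x) + (\<Sum>x\<in>A. \<Sum>j\<in>K. r x * (e x - c * t' x) * (b j * \<phi> j x))"
          by (rule sum.distrib)
        also have "(\<Sum>x\<in>A. \<Sum>j\<in>K. r x * (e x - c * t' x) * (b j * \<phi> j x)) = (\<Sum>j\<in>K. \<Sum>x\<in>A. r x * (e x - c * t' x) * (b j * \<phi> j x))"
          by (rule sum.swap)
        also have "\<dots> = (\<Sum>j\<in>K. b j * (\<Sum>x\<in>A. r x * (e x - c * t' x) * \<phi> j x))"
          by (rule sum.cong[OF refl]) (simp add: sum_distrib_left mult_ac)
        finally show ?thesis .
      qed
    then show ?thesis using ot oK by simp
  qed
  show ?case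
  proof (intro exI ballI)
    fix k assume "k \<in> insert t K"
    then show "(\<Sum>x\<in>A. r x * (h x - (\<Sum>j\<in>insert t K. a' j * \<phi> j x)) * \<phi> k x) = 0"
      using oK ott by (auto simp: sumeq)
  qed
qed

lemma finite_Xspace: "finite (Xspace p :: (nat \<Rightarrow> 'x::finite) set)"
  unfolding Xspace_def by (simp add: finite_PiE)

lemma card_Xspace: "card (Xspace p :: (nat \<Rightarrow> 'x::finite) set) = card (UNIV :: 'x set) ^ p"
  unfolding Xspace_def by (simp add: card_PiE)

lemma sum_Omega_fst:
  fixes F :: "(nat \<Rightarrow> 'x::finite) \<times> bool \<Rightarrow> real"
  shows "sum F {\<omega>\<in>Omega p. C (fst \<omega>)} = (\<Sum>x\<in>{x\<in>Xspace p. C x}. F (x,True) + F (x,False))"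
proof -
  have "{\<omega>\<in>Omega p. C (fst \<omega>)} = {x\<in>Xspace p. C x} \<times> {True, False}"
    unfolding Omega_def by auto
  then have "sum F {\<omega>\<in>Omega p. C (fst \<omega>)} = (\<Sum>x\<in>{x\<in>Xspace p. C x}. \<Sum>y\<in>{True,False}. F (x,y))"
    using sum.cartesian_product[of "\<lambda>x y. F (x,y)" "{True,False}" "{x\<in>Xspace p. C x}"] by simp
  then show ?thesis by simp
qed

lemma sum_Omega_snd:
  fixes F :: "(nat \<Rightarrow> 'x::finite) \<times> bool \<Rightarrow> real"
  shows "sum F {\<omega>\<in>Omega p. C (fst \<omega>) \<and> snd \<omega> = y} = (\<Sum>x\<in>{x\<in>Xspace p. C x}. F (x,y))"
proof -
  have "{\<omega>\<in>Omega p. C (fst \<omega>) \<and> snd \<omega> = y} = (\<lambda>x. (x,y)) ` {x\<in>Xspace p. C x}"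
    unfolding Omega_def by auto
  moreover have "inj_on (\<lambda>x. (x,y)) A" for A :: "(nat \<Rightarrow> 'x) set" by (auto simp: inj_on_def)
  ultimately show ?thesis by (simp add: sum.reindex)
qed

lemma sum_Omega_all:
  fixes F :: "(nat \<Rightarrow> 'x::finite) \<times> bool \<Rightarrow> real"
  shows "sum F (Omega p) = (\<Sum>x\<in>Xspace p. F (x,True) + F (x,False))"
  using sum_Omega_fst[of F p "\<lambda>_. True"] by simp


theorem theorem5:
  fixes p :: nat
  assumes "p \<ge> 1"
  shows "\<exists>\<epsilon>>0. \<forall>P :: (nat \<Rightarrow> 'x::finite) \<times> bool \<Rightarrow> real.
           is_prob_vec p P \<and> l1_dist p P (uniform_vec p) < \<epsilon> \<longrightarrow>
           (\<exists>Q\<in>same_pairwise p P. additive_regression p Q)"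
proof -
  define N :: real where "N = real (card (UNIV::'x set)) ^ p"
  have cardpos: "card (UNIV::'x set) > 0" using finite_UNIV_card_ge_0[where ?'a='x] by simp
  have Npos: "N > 0" unfolding N_def using cardpos by simp
  have unif: "uniform_vec p \<omega> = 1/(2*N)" for \<omega> :: "(nat \<Rightarrow> 'x) \<times> bool"
    by (simp add: uniform_vec_def N_def)
  have finX: "finite (Xspace p :: (nat \<Rightarrow> 'x) set)" by (rule finite_Xspace)
  have memO: "((x,y) \<in> Omega p) \<longleftrightarrow> x \<in> Xspace p" for x :: "nat \<Rightarrow> 'x" and y
    by (simp add: Omega_def)
  show ?thesis
  proof (intro exI[of _ "1/(2*N)"] conjI allI impI)
    show "1/(2*N) > 0" using Npos by simp
    fix P :: "(nat \<Rightarrow> 'x) \<times> bool \<Rightarrow> real"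
    assume H: "is_prob_vec p P \<and> l1_dist p P (uniform_vec p) < 1/(2*N)"
    define u where "u = 1/(2*N)"
    have upos: "u > 0" unfolding u_def using Npos by simp
    have Pnn: "\<forall>\<omega>\<in>Omega p. P \<omega> \<ge> 0" and Psum: "sum P (Omega p) = 1"
      using H unfolding is_prob_vec_def by auto
    have PT: "P (x,True) \<ge> 0" and PF: "P (x,False) \<ge> 0" if "x \<in> Xspace p" for x :: "nat \<Rightarrow> 'x"
      using Pnn that memO by blast+
    define d where "d x = \<bar>P (x,True) - u\<bar> + \<bar>P (x,False) - u\<bar>" for x :: "nat \<Rightarrow> 'x"
    have dsum: "(\<Sum>x\<in>Xspace p. d x) < u"
    proof -
      have "l1_dist p P (uniform_vec p) = (\<Sum>x\<in>Xspace p. d x)"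
        unfolding l1_dist_def d_def u_def unif by (rule sum_Omega_all)
      then show ?thesis using H u_def by simp
    qed
    have dnn: "d x \<ge> 0" for x unfolding d_def by simp
    have dle: "d x < u" if "x \<in> Xspace p" for x :: "nat \<Rightarrow> 'x"
    proof -
      have "d x \<le> (\<Sum>x\<in>Xspace p. d x)" using member_le_sum[OF that, of d] dnn finX by simp
      then show ?thesis using dsum by simp
    qed
    define r where "r x = P (x,True) + P (x,False)" for x :: "nat \<Rightarrow> 'x"
    have rlow: "r x > u" if "x \<in> Xspace p" for x :: "nat \<Rightarrow> 'x"
    proof -
      have "P (x,True) \<ge> u - \<bar>P (x,True) - u\<bar>" "P (x,False) \<ge> u - \<bar>P (x,False) - u\<bar>" by linarith+
      then show ?thesis using dle[OF that] unfolding r_def d_def by linarith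
    qed
    have rpos: "\<forall>x\<in>Xspace p. r x > 0" using rlow upos by (meson less_trans)
    define h0 where "h0 x = (P (x,True) - P (x,False)) / (2 * r x)" for x :: "nat \<Rightarrow> 'x"
    define K where "K = {..<p} \<times> (UNIV::'x set)"
    define \<phi> where "\<phi> = (\<lambda>(i,b) (x::nat \<Rightarrow> 'x). if x i = b then 1 else (0::real))"
    have finK: "finite K" unfolding K_def by simp
    obtain a where a: "\<forall>k\<in>K. (\<Sum>x\<in>Xspace p. r x * (h0 x - (\<Sum>j\<in>K. a j * \<phi> j x)) * \<phi> k x) = 0"
      using proj_exists[OF finK finX rpos, of h0 \<phi>] by blast
    define g0 where "g0 x = (\<Sum>j\<in>K. a j * \<phi> j x)" for x :: "nat \<Rightarrow> 'x"
    define e where "e x = h0 x - g0 x" for x :: "nat \<Rightarrow> 'x"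
    have orth: "\<forall>k\<in>K. (\<Sum>x\<in>Xspace p. r x * e x * \<phi> k x) = 0"
      using a unfolding e_def g0_def .
    have orth_g0: "(\<Sum>x\<in>Xspace p. r x * e x * g0 x) = 0"
    proof -
      have "(\<Sum>x\<in>Xspace p. r x * e x * g0 x) = (\<Sum>x\<in>Xspace p. \<Sum>j\<in>K. a j * (r x * e x * \<phi> j x))"
        unfolding g0_def by (rule sum.cong[OF refl]) (simp add: sum_distrib_left mult_ac)
      also have "\<dots> = (\<Sum>j\<in>K. \<Sum>x\<in>Xspace p. a j * (r x * e x * \<phi> j x))" by (rule sum.swap)
      also have "\<dots> = (\<Sum>j\<in>K. a j * (\<Sum>x\<in>Xspace p. r x * e x * \<phi> j x))"
        by (simp add: sum_distrib_left)
      also have "\<dots> = 0" using orth by simp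
      finally show ?thesis .
    qed
    have pyth: "(\<Sum>x\<in>Xspace p. r x * h0 x * h0 x) = (\<Sum>x\<in>Xspace p. r x * g0 x * g0 x)
       + (\<Sum>x\<in>Xspace p. r x * e x * e x) + 2 * (\<Sum>x\<in>Xspace p. r x * e x * g0 x)"
    proof -
      have "r x * h0 x * h0 x = r x * g0 x * g0 x + r x * e x * e x + 2 * (r x * e x * g0 x)" for x :: "nat \<Rightarrow> 'x"
        unfolding e_def by (simp add: algebra_simps)
      then show ?thesis by (simp add: sum.distrib sum_distrib_left)
    qed
    have ee: "(\<Sum>x\<in>Xspace p. r x * e x * e x) \<ge> 0"
    proof (rule sum_nonneg)
      fix x :: "nat \<Rightarrow> 'x" assume "x \<in> Xspace p"
      then have "0 \<le> r x" using rpos by (simp add: less_imp_le)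
      then have "0 \<le> r x * (e x * e x)" by simp
      then show "0 \<le> r x * e x * e x" by (simp add: mult.assoc)
    qed
    have G: "(\<Sum>x\<in>Xspace p. r x * g0 x * g0 x) \<le> (\<Sum>x\<in>Xspace p. r x * h0 x * h0 x)"
      using pyth ee orth_g0 by linarith
    have hpt: "r x * h0 x * h0 x \<le> d x / 4" if x: "x \<in> Xspace p" for x :: "nat \<Rightarrow> 'x"
    proof -
      define D where "D = P (x,True) - P (x,False)"
      have r0: "r x > 0" using rpos x by blast
      have eq: "r x * h0 x * h0 x = (D * D) / (4 * r x)"
        unfolding h0_def D_def using r0 by (simp add: field_simps)
      have D1: "\<bar>D\<bar> \<le> r x" unfolding D_def r_def using PT[OF x] PF[OF x] by linarith
      have D2: "\<bar>D\<bar> \<le> d x" unfolding D_def d_def by linarith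
      have "D * D = \<bar>D\<bar> * \<bar>D\<bar>" by (simp add: abs_mult[symmetric])
      also have "\<dots> \<le> d x * r x" using D1 D2 by (intro mult_mono) auto
      finally have "D * D \<le> d x * r x" .
      then have "(D * D) / (4 * r x) \<le> (d x * r x) / (4 * r x)"
        using r0 by (intro divide_right_mono) auto
      also have "\<dots> = d x / 4" using r0 by simp
      finally show ?thesis using eq by simp
    qed
    have H0: "(\<Sum>x\<in>Xspace p. r x * h0 x * h0 x) < u / 4"
    proof -
      have "(\<Sum>x\<in>Xspace p. r x * h0 x * h0 x) \<le> (\<Sum>x\<in>Xspace p. d x / 4)"
        by (rule sum_mono) (rule hpt)
      also have "\<dots> = (\<Sum>x\<in>Xspace p. d x) / 4" by (simp add: sum_divide_distrib)
      finally show ?thesis using dsum by simp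
    qed
    have g0b: "\<bar>g0 x\<bar> < 1/2" if x: "x \<in> Xspace p" for x :: "nat \<Rightarrow> 'x"
    proof -
      have nn: "0 \<le> r y * g0 y * g0 y" if "y \<in> Xspace p" for y
      proof -
        have "0 \<le> r y" using rpos that by (simp add: less_imp_le)
        then have "0 \<le> r y * (g0 y * g0 y)" by simp
        then show ?thesis by (simp add: mult.assoc)
      qed
      have "r x * g0 x * g0 x \<le> (\<Sum>x\<in>Xspace p. r x * g0 x * g0 x)"
        using member_le_sum[OF x, of "\<lambda>y. r y * g0 y * g0 y"] nn finX by simp
      then have lt: "r x * (g0 x * g0 x) < u / 4" using G H0 by (simp add: mult.assoc)
      have "u * (g0 x * g0 x) \<le> r x * (g0 x * g0 x)"
        using rlow[OF x] by (intro mult_right_mono) auto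
      then have "u * (g0 x * g0 x) < u * (1/4)" using lt by simp
      then have "g0 x * g0 x < 1/4" using upos by simp
      then have "\<bar>g0 x\<bar> * \<bar>g0 x\<bar> < (1/2) * (1/2)" by (simp add: abs_mult[symmetric])
      then show ?thesis
      proof (rule contrapos_pp)
        assume "\<not> \<bar>g0 x\<bar> < 1/2"
        then have "1/2 \<le> \<bar>g0 x\<bar>" by simp
        then have "(1/2) * (1/2) \<le> \<bar>g0 x\<bar> * \<bar>g0 x\<bar>" by (intro mult_mono) auto
        then show "\<not> \<bar>g0 x\<bar> * \<bar>g0 x\<bar> < (1/2) * (1/2)" by simp
      qed
    qed
    define g where "g x = 1/2 + g0 x" for x :: "nat \<Rightarrow> 'x"
    define Q where "Q = (\<lambda>(x,y). if y then r x * g x else r x * (1 - g x))"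
    have QT: "Q (x,True) = r x * g x" and QF: "Q (x,False) = r x * (1 - g x)" for x :: "nat \<Rightarrow> 'x"
      unfolding Q_def by simp_all
    have Qsum2: "Q (x,True) + Q (x,False) = r x" for x :: "nat \<Rightarrow> 'x"
      unfolding QT QF by (simp add: algebra_simps)
    have g0eq: "g0 x = (\<Sum>i<p. a (i, x i))" for x :: "nat \<Rightarrow> 'x"
    proof -
      have "g0 x = (\<Sum>i<p. \<Sum>b\<in>UNIV. a (i,b) * \<phi> (i,b) x)"
        unfolding g0_def K_def by (simp add: sum.cartesian_product)
      also have "\<dots> = (\<Sum>i<p. a (i, x i))"
      proof (rule sum.cong[OF refl])
        fix i
        have "(\<Sum>b\<in>UNIV. a (i,b) * \<phi> (i,b) x) = (\<Sum>b\<in>UNIV. if b = x i then a (i,b) else 0)"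
          unfolding \<phi>_def by (rule sum.cong) auto
        then show "(\<Sum>b\<in>UNIV. a (i,b) * \<phi> (i,b) x) = a (i, x i)" by simp
      qed
      finally show ?thesis .
    qed
    have ortho_i: "(\<Sum>x\<in>{x\<in>Xspace p. x i = b}. r x * g x) = (\<Sum>x\<in>{x\<in>Xspace p. x i = b}. P (x,True))"
      if i: "i < p" for i b
    proof -
      have k: "(i,b) \<in> K" unfolding K_def using i by simp
      have o: "(\<Sum>x\<in>Xspace p. r x * e x * \<phi> (i,b) x) = 0" using orth k by blast
      have pt: "(if x i = b then r x * g x else 0) = (if x i = b then P (x,True) else 0) - r x * e x * \<phi> (i,b) x"
        if x: "x \<in> Xspace p" for x :: "nat \<Rightarrow> 'x"
      proof -
        have r0: "r x \<noteq> 0" using rpos x by (metis less_irrefl)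
        have "r x * h0 x = (P (x,True) - P (x,False)) / 2" unfolding h0_def using r0 by simp
        then have "r x * g x = P (x,True) - r x * e x"
          unfolding g_def e_def r_def by (simp add: algebra_simps)
        then show ?thesis unfolding \<phi>_def by simp
      qed
      have "(\<Sum>x\<in>{x\<in>Xspace p. x i = b}. r x * g x) = (\<Sum>x\<in>Xspace p. if x i = b then r x * g x else 0)"
        using finX by (rule sum.inter_filter)
      also have "\<dots> = (\<Sum>x\<in>Xspace p. (if x i = b then P (x,True) else 0) - r x * e x * \<phi> (i,b) x)"
        using pt by (rule sum.cong[OF refl])
      also have "\<dots> = (\<Sum>x\<in>Xspace p. if x i = b then P (x,True) else 0)"
        using o by (simp add: sum_subtractf)
      also have "\<dots> = (\<Sum>x\<in>{x\<in>Xspace p. x i = b}. P (x,True))"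
        using finX by (rule sum.inter_filter[symmetric])
      finally show ?thesis .
    qed
    show "\<exists>Q\<in>same_pairwise p P. additive_regression p Q"
    proof (intro bexI)
      show "additive_regression p Q"
        unfolding additive_regression_def
      proof (intro exI[of _ "\<lambda>i b. a (i,b) + (if i = 0 then 1/2 else 0)"] ballI impI)
        fix x :: "nat \<Rightarrow> 'x" assume x: "x \<in> Xspace p" and "Q (x, True) + Q (x, False) > 0"
        have r0: "r x \<noteq> 0" using rpos x by (metis less_irrefl)
        have "cond_exp_Y Q x = g x" unfolding cond_exp_Y_def Qsum2[symmetric] using r0 by (simp add: QT QF algebra_simps)
        also have "\<dots> = (\<Sum>i<p. a (i, x i)) + (\<Sum>i<p. if i = 0 then 1/2 else 0)"
          using assms unfolding g_def g0eq by simp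
        also have "\<dots> = (\<Sum>i<p. a (i, x i) + (if i = 0 then 1/2 else 0))"
          by (simp add: sum.distrib)
        finally show "cond_exp_Y Q x = (\<Sum>i<p. a (i, x i) + (if i = 0 then 1/2 else 0))" .
      qed
      show "Q \<in> same_pairwise p P"
        unfolding same_pairwise_def
      proof (intro CollectI conjI allI impI)
        show "is_prob_vec p Q"
          unfolding is_prob_vec_def
        proof
          show "\<forall>\<omega>\<in>Omega p. 0 \<le> Q \<omega>"
          proof
            fix \<omega> :: "(nat \<Rightarrow> 'x) \<times> bool" assume "\<omega> \<in> Omega p"
            then obtain x y where w: "\<omega> = (x,y)" and x: "x \<in> Xspace p" by (cases \<omega>) (auto simp: Omega_def)
            have "0 < r x" using rpos x by blast
            moreover have "0 \<le> g x" "0 \<le> 1 - g x" using g0b[OF x] unfolding g_def by auto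
            ultimately show "0 \<le> Q \<omega>" unfolding w Q_def by auto
          qed
          have "sum Q (Omega p) = (\<Sum>x\<in>Xspace p. r x)" unfolding sum_Omega_all Qsum2 ..
          also have "\<dots> = sum P (Omega p)" unfolding sum_Omega_all r_def ..
          finally show "sum Q (Omega p) = 1" using Psum by simp
        qed
      next
        fix i j :: nat and a' b' :: 'x
        show "margXX p Q i j a' b' = margXX p P i j a' b'"
          unfolding margXX_def sum_Omega_fst[of _ p "\<lambda>x. x i = a' \<and> x j = b'"] Qsum2 r_def ..
      next
        fix i :: nat and a' :: 'x and y :: bool assume i: "i < p"
        show "margXY p Q i a' y = margXY p P i a' y"
        proof (cases y)
          case True
          then show ?thesis unfolding margXY_def sum_Omega_snd[of _ p "\<lambda>x. x i = a'"] QT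
            using ortho_i[OF i] by (simp add: QT)
        next
          case False
          have "(\<Sum>x\<in>{x\<in>Xspace p. x i = a'}. Q (x,False)) = (\<Sum>x\<in>{x\<in>Xspace p. x i = a'}. r x - r x * g x)"
            unfolding QF by (simp add: algebra_simps)
          also have "\<dots> = (\<Sum>x\<in>{x\<in>Xspace p. x i = a'}. r x) - (\<Sum>x\<in>{x\<in>Xspace p. x i = a'}. P (x,True))"
            using ortho_i[OF i] by (simp add: sum_subtractf)
          also have "\<dots> = (\<Sum>x\<in>{x\<in>Xspace p. x i = a'}. P (x,False))"
            unfolding r_def by (simp add: sum.distrib)
          finally show ?thesis unfolding margXY_def sum_Omega_snd[of _ p "\<lambda>x. x i = a'"] using False by simp
        qed
      qed
    qed
  qed
qed

end
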